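(* For all integers $r\ge3$ and $n\ge4$, $\chi_D(K_r^{\times n})=r+1$.
   Context: $K_r$ is the complete graph on $r$ vertices. The weak (direct) product $G\times H$ has vertex set $V(G)\times V(H)$, with $(g_1,h_1)$ adjacent to $(g_2,h_2)$ iff $g_1g_2\in E(G)$ and $h_1h_2\in E(H)$; $K_r^{\times n}$ is the $n$-fold weak product of $K_r$ with itself. A coloring is distinguishing if the only graph automorphism mapping every color class onto itself is the identity; $\chi_D(G)$ is the minimum number of colors of a proper distinguishing coloring of $G$. *)

theory Defs
  imports Main
begin

definition graph_automorphism :: "'a set \<Rightarrow> ('a \<Rightarrow> 'a \<Rightarrow> bool) \<Rightarrow> ('a \<Rightarrow> 'a) \<Rightarrow> bool" where
  "graph_automorphism V E f \<longleftrightarrow>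
     bij_betw f V V \<and> (\<forall>u\<in>V. \<forall>v\<in>V. E u v \<longleftrightarrow> E (f u) (f v))"

definition proper_coloring :: "'a set \<Rightarrow> ('a \<Rightarrow> 'a \<Rightarrow> bool) \<Rightarrow> ('a \<Rightarrow> nat) \<Rightarrow> bool" where
  "proper_coloring V E c \<longleftrightarrow> (\<forall>u\<in>V. \<forall>v\<in>V. E u v \<longrightarrow> c u \<noteq> c v)"

definition distinguishing_coloring :: "'a set \<Rightarrow> ('a \<Rightarrow> 'a \<Rightarrow> bool) \<Rightarrow> ('a \<Rightarrow> nat) \<Rightarrow> bool" where
  "distinguishing_coloring V E c \<longleftrightarrow>
     (\<forall>f. graph_automorphism V E f \<and> (\<forall>v\<in>V. c (f v) = c v) \<longrightarrow> (\<forall>v\<in>V. f v = v))"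

definition dist_chromatic_number :: "'a set \<Rightarrow> ('a \<Rightarrow> 'a \<Rightarrow> bool) \<Rightarrow> nat" where
  "dist_chromatic_number V E =
     (LEAST k. \<exists>c. c ` V \<subseteq> {..<k} \<and> proper_coloring V E c \<and> distinguishing_coloring V E c)"

text \<open>The n-fold weak (direct) product of K_r: vertices are n-tuples over {0..<r},
  two tuples adjacent iff they differ in every coordinate.\<close>
definition Kr_pow_verts :: "nat \<Rightarrow> nat \<Rightarrow> nat list set" where
  "Kr_pow_verts r n = {xs. length xs = n \<and> set xs \<subseteq> {..<r}}"

definition Kr_pow_adj :: "nat \<Rightarrow> nat list \<Rightarrow> nat list \<Rightarrow> bool" where
  "Kr_pow_adj n xs ys \<longleftrightarrow> (\<forall>i<n. xs ! i \<noteq> ys ! i)"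

end

theory Submission
  imports Defs
begin

definition LS :: "nat \<Rightarrow> (nat \<Rightarrow> nat set) \<Rightarrow> nat list set" where
  "LS n F = {z. length z = n \<and> (\<forall>i<n. z!i \<in> F i)}"

lemma LS_Suc: "LS (Suc n) F = (\<lambda>(h,t). h#t) ` (F 0 \<times> LS n (\<lambda>i. F (Suc i)))"
proof
  show "LS (Suc n) F \<subseteq> (\<lambda>(h,t). h#t) ` (F 0 \<times> LS n (\<lambda>i. F (Suc i)))"
  proof
    fix z assume z: "z \<in> LS (Suc n) F"
    then obtain h t where zt: "z = h # t" unfolding LS_def by (cases z) auto
    have "h \<in> F 0" using z zt unfolding LS_def by force
    moreover have "t \<in> LS n (\<lambda>i. F (Suc i))" using z zt unfolding LS_def by force
    ultimately show "z \<in> (\<lambda>(h,t). h#t) ` (F 0 \<times> LS n (\<lambda>i. F (Suc i)))" using zt by force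
  qed
next
  show "(\<lambda>(h,t). h#t) ` (F 0 \<times> LS n (\<lambda>i. F (Suc i))) \<subseteq> LS (Suc n) F"
    unfolding LS_def by (auto simp: less_Suc_eq_0_disj)
qed

lemma card_LS: "card (LS n F) = (\<Prod>i<n. card (F i))"
proof (induction n arbitrary: F)
  case 0
  have "LS 0 F = {[]}" unfolding LS_def by auto
  then show ?case by simp
next
  case (Suc n)
  have inj: "inj_on (\<lambda>(h,t). h#t) (F 0 \<times> LS n (\<lambda>i. F (Suc i)))"
    by (auto simp: inj_on_def)
  have "card (LS (Suc n) F) = card (F 0) * card (LS n (\<lambda>i. F (Suc i)))"
    unfolding LS_Suc by (simp add: card_image[OF inj] card_cartesian_product)
  also have "\<dots> = (\<Prod>i<Suc n. card (F i))"
    unfolding prod.lessThan_Suc_shift using Suc.IH[of "\<lambda>i. F (Suc i)"] by simp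
  finally show ?case .
qed

locale KR =
  fixes r n :: nat
  assumes r3: "3 \<le> r" and n4: "4 \<le> n"
begin

abbreviation "V \<equiv> Kr_pow_verts r n"
abbreviation "adj \<equiv> Kr_pow_adj n"

definition hd :: "nat list \<Rightarrow> nat list \<Rightarrow> nat" where
  "hd x y = card {i. i < n \<and> x!i \<noteq> y!i}"

lemma hd_le: "hd x y \<le> n"
proof -
  have "{i. i < n \<and> x!i \<noteq> y!i} \<subseteq> {..<n}" by auto
  then show ?thesis unfolding hd_def by (metis card_lessThan card_mono finite_lessThan)
qed

lemma V_iff: "x \<in> V \<longleftrightarrow> length x = n \<and> (\<forall>i<n. x!i < r)"
  unfolding Kr_pow_verts_def by (auto simp: set_conv_nth)

lemma CN:
  assumes x: "x \<in> V" and y: "y \<in> V"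
  shows "card {z\<in>V. adj x z \<and> adj y z} = (r-1)^(n - hd x y) * (r-2)^(hd x y)"
proof -
  have "{z\<in>V. adj x z \<and> adj y z} = LS n (\<lambda>i. {..<r} - {x!i, y!i})"
    unfolding LS_def V_iff Kr_pow_adj_def by auto
  then have "card {z\<in>V. adj x z \<and> adj y z} = (\<Prod>i<n. card ({..<r} - {x!i, y!i}))"
    by (simp add: card_LS)
  also have "\<dots> = (\<Prod>i<n. if x!i = y!i then r - 1 else r - 2)"
  proof (rule prod.cong)
    fix i assume "i \<in> {..<n}"
    then have "x!i < r" "y!i < r" using x y V_iff by auto
    then show "card ({..<r} - {x!i, y!i}) = (if x!i = y!i then r - 1 else r - 2)"
      by (auto simp: card_Diff_subset)
  qed simp
  also have "\<dots> = (\<Prod>i\<in>{..<n} \<inter> {i. x!i = y!i}. r - 1) * (\<Prod>i\<in>{..<n} \<inter> - {i. x!i = y!i}. r - 2)"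
    by (rule prod.If_cases) simp
  also have "\<dots> = (r-1)^card ({..<n} \<inter> {i. x!i = y!i}) * (r-2)^card ({..<n} \<inter> - {i. x!i = y!i})"
    by simp
  also have "card ({..<n} \<inter> - {i. x!i = y!i}) = hd x y"
    unfolding hd_def by (rule arg_cong[where f=card]) auto
  also have "card ({..<n} \<inter> {i. x!i = y!i}) = n - hd x y"
  proof -
    have "card ({..<n} \<inter> {i. x!i = y!i}) + card ({..<n} \<inter> - {i. x!i = y!i}) = n"
      using card_Int_Diff[of "{..<n}" "{i. x!i = y!i}"] by (simp add: Diff_eq)
    then show ?thesis using \<open>card ({..<n} \<inter> - {i. x!i = y!i}) = hd x y\<close> by simp
  qed
  finally show ?thesis .
qed

lemma pow_inj:
  assumes "d1 \<le> n" "d2 \<le> n" "(r-1)^(n-d1)*(r-2)^d1 = (r-1)^(n-d2)*((r-2)::nat)^d2"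
  shows "d1 = d2"
proof (rule ccontr)
  have key: "(r-1)^(n-a)*(r-2)^a > (r-1)^(n-b)*((r-2)::nat)^b" if "a < b" "b \<le> n" for a b
  proof -
    have "n - a = (n-b) + (b-a)" using that by simp
    then have e1: "(r-1)^(n-a) = (r-1)^(n-b) * (r-1)^(b-a)"
      by (metis power_add)
    have "b = a + (b-a)" using that by simp
    then have e2: "((r-2)::nat)^b = (r-2)^a * (r-2)^(b-a)"
      by (metis power_add)
    have lt: "((r-2)::nat)^(b-a) < (r-1)^(b-a)"
      using r3 that by (intro power_strict_mono) auto
    have pos: "0 < (r-1)^(n-b) * ((r-2)::nat)^a" using r3 by simp
    have "(r-1)^(n-b)*((r-2)::nat)^b = ((r-1)^(n-b) * (r-2)^a) * (r-2)^(b-a)"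
      by (simp add: e2 ac_simps)
    also have "\<dots> < ((r-1)^(n-b) * (r-2)^a) * (r-1)^(b-a)"
      using lt pos by simp
    also have "\<dots> = (r-1)^(n-a)*(r-2)^a" by (simp only: e1 ac_simps)
    finally show ?thesis .
  qed
  assume "d1 \<noteq> d2"
  then show False using key[of d1 d2] key[of d2 d1] assms by (cases "d1 < d2") auto
qed

lemma aut_hd:
  assumes f: "graph_automorphism V adj f" and x: "x \<in> V" and y: "y \<in> V"
  shows "hd (f x) (f y) = hd x y"
proof -
  have bij: "bij_betw f V V" and pres: "\<And>u v. u\<in>V \<Longrightarrow> v\<in>V \<Longrightarrow> adj u v \<longleftrightarrow> adj (f u) (f v)"
    using f unfolding graph_automorphism_def by auto
  have fx: "f x \<in> V" and fy: "f y \<in> V" using bij x y by (auto simp: bij_betw_def)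
  have "{z\<in>V. adj (f x) z \<and> adj (f y) z} = f ` {z\<in>V. adj x z \<and> adj y z}"
  proof
    show "f ` {z\<in>V. adj x z \<and> adj y z} \<subseteq> {z\<in>V. adj (f x) z \<and> adj (f y) z}"
      using bij pres x y by (auto simp: bij_betw_def)
    show "{z\<in>V. adj (f x) z \<and> adj (f y) z} \<subseteq> f ` {z\<in>V. adj x z \<and> adj y z}"
    proof
      fix z assume z: "z \<in> {z\<in>V. adj (f x) z \<and> adj (f y) z}"
      then obtain z' where "z' \<in> V" "z = f z'" using bij by (auto simp: bij_betw_def)
      then show "z \<in> f ` {z\<in>V. adj x z \<and> adj y z}" using z pres x y by auto
    qed
  qed
  moreover have "inj_on f {z\<in>V. adj x z \<and> adj y z}"
    using bij by (auto simp: bij_betw_def inj_on_def)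
  ultimately have "card {z\<in>V. adj (f x) z \<and> adj (f y) z} = card {z\<in>V. adj x z \<and> adj y z}"
    by (simp add: card_image)
  then show ?thesis using CN[OF fx fy] CN[OF x y] pow_inj hd_le by metis
qed


end
context KR begin
definition g :: "nat \<Rightarrow> nat \<Rightarrow> nat \<Rightarrow> nat" where
  "g u v t = (if t < min u v then t else if t+1 < max u v then t+1 else t+2)"

lemma g_props: "u \<noteq> v \<Longrightarrow> u < r \<Longrightarrow> v < r \<Longrightarrow> t < r - 2 \<Longrightarrow> g u v t < r \<and> g u v t \<noteq> u \<and> g u v t \<noteq> v"
  unfolding g_def by (auto simp: min_def max_def split: if_splits)

lemma g_inj: "u \<noteq> v \<Longrightarrow> g u v s = g u v t \<Longrightarrow> s = t"
  unfolding g_def by (auto simp: min_def max_def split: if_splits)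

definition h :: "nat \<Rightarrow> nat \<Rightarrow> nat" where
  "h u v = (if 0 \<noteq> u \<and> 0 \<noteq> v then 0 else if 1 \<noteq> u \<and> 1 \<noteq> v then 1 else 2)"

lemma h_props: "h u v < 3 \<and> h u v \<noteq> u \<and> h u v \<noteq> v"
  unfolding h_def by auto

definition gen :: "nat list \<Rightarrow> nat list \<Rightarrow> nat list" where
  "gen x z = map (\<lambda>k. h (x!k) (z!k)) [0..<n]"

lemma gen_V: "gen x z \<in> V" and gen_nth: "k < n \<Longrightarrow> gen x z ! k \<noteq> x!k \<and> gen x z ! k \<noteq> z!k"
  using h_props r3 by (auto simp: gen_def V_iff) (meson less_le_trans)

lemma upd_V: "x \<in> V \<Longrightarrow> a < r \<Longrightarrow> j < n \<Longrightarrow> x[j:=a] \<in> V"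
  by (auto simp: V_iff nth_list_update)

lemma V_len: "x \<in> V \<Longrightarrow> length x = n" by (simp add: V_iff)

lemma n_pos: "0 < n" using n4 by simp

context
  fixes c :: "nat list \<Rightarrow> nat"
  assumes pc: "proper_coloring V adj c" and cr: "\<forall>x\<in>V. c x < r"
begin

lemma pc': "u \<in> V \<Longrightarrow> v \<in> V \<Longrightarrow> adj u v \<Longrightarrow> c u \<noteq> c v"
  using pc unfolding proper_coloring_def by blast

lemma K:
  assumes x: "x \<in> V" and q: "q \<in> V" and ab: "a < r" "b < r" "a \<noteq> b"
    and gq: "\<forall>k. 0 < k \<and> k < n \<longrightarrow> q!k \<noteq> x!k"
    and neq: "c (x[0:=a]) \<noteq> c (x[0:=b])"
  shows "c (q[0:=a]) = c (x[0:=a]) \<and> c (q[0:=b]) = c (x[0:=b])"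
proof -
  define W where "W t = map (\<lambda>k. if k = 0 then g a b t else g (x!k) (q!k) t) [0..<n]" for t
  have xl: "length x = n" and ql: "length q = n" using x q V_len by auto
  have xr: "\<And>k. k < n \<Longrightarrow> x!k < r" and qr: "\<And>k. k < n \<Longrightarrow> q!k < r" using x q V_iff by auto
  define U where "U k = (if k = 0 then a else x!k)" for k
  define Q where "Q k = (if k = 0 then b else q!k)" for k
  have UQ: "U k < r \<and> Q k < r \<and> U k \<noteq> Q k" if "k < n" for k
    using that ab xr qr gq unfolding U_def Q_def by auto
  have Wn: "W t ! k = g (U k) (Q k) t" if "k < n" for k t
    using that unfolding W_def U_def Q_def by simp
  have Wl: "length (W t) = n" for t unfolding W_def by simp
  have Wk: "W t ! k < r \<and> W t ! k \<noteq> U k \<and> W t ! k \<noteq> Q k" if "k < n" "t < r - 2" for k t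
    unfolding Wn[OF that(1)] using g_props UQ[OF that(1)] that(2) by blast
  have WV: "W t \<in> V" if "t < r - 2" for t
    unfolding V_iff using Wl Wk that by blast
  have Wadj: "adj (W s) (W t)" if "s \<noteq> t" for s t
    unfolding Kr_pow_adj_def
  proof (intro allI impI)
    fix k assume k: "k < n"
    show "W s ! k \<noteq> W t ! k" unfolding Wn[OF k] using g_inj UQ[OF k] that by blast
  qed
  define C where "C = (\<lambda>t. c (W t)) ` {..<r-2}"
  have injC: "inj_on (\<lambda>t. c (W t)) {..<r-2}"
    by (rule inj_onI) (metis Wadj WV lessThan_iff pc')
  have cardC: "card C = r - 2" unfolding C_def using injC by (simp add: card_image)
  have Csub: "C \<subseteq> {..<r}" unfolding C_def using WV cr by auto
  define D where "D = {..<r} - C"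
  have finC: "finite C" using Csub finite_subset by blast
  have cardD: "card D = 2" unfolding D_def using Csub cardC r3 finC by (simp add: card_Diff_subset)
  have pair: "{c p1, c p2} = D" if p1: "p1 \<in> V" and p2: "p2 \<in> V" and p12: "adj p1 p2"
     and a1: "\<And>t. t < r - 2 \<Longrightarrow> adj p1 (W t)" and a2: "\<And>t. t < r - 2 \<Longrightarrow> adj p2 (W t)" for p1 p2
  proof -
    have "c p1 \<notin> C" "c p2 \<notin> C" unfolding C_def using a1 a2 pc' WV p1 p2 by fastforce+
    moreover have "c p1 < r" "c p2 < r" using cr p1 p2 by auto
    moreover have "c p1 \<noteq> c p2" using pc' p1 p2 p12 by blast
    ultimately have sub: "{c p1, c p2} \<subseteq> D" and "card {c p1, c p2} = 2" unfolding D_def by auto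
    then show ?thesis using cardD by (metis card_subset_eq finite_Diff finite_lessThan D_def)
  qed
  have xa: "x[0:=a] \<in> V" and xb: "x[0:=b] \<in> V" and qa: "q[0:=a] \<in> V" and qb: "q[0:=b] \<in> V"
    using upd_V x q ab n_pos by auto
  have adjW: "adj (p[0:=e]) (W t)" if "p = x \<or> p = q" "e = a \<or> e = b" "t < r - 2" for p e t
    unfolding Kr_pow_adj_def
  proof (intro allI impI)
    fix k assume k: "k < n"
    have "p[0:=e] ! k = U k \<or> p[0:=e] ! k = Q k"
      using that xl ql k unfolding U_def Q_def by (cases "k = 0") auto
    then show "p[0:=e] ! k \<noteq> W t ! k" using Wk[OF k that(3)] by auto
  qed
  have ad1: "adj (x[0:=a]) (q[0:=b])" and ad2: "adj (x[0:=b]) (q[0:=a])"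
    unfolding Kr_pow_adj_def using gq ab xl ql by (auto simp: nth_list_update)
  have D1: "{c (x[0:=a]), c (q[0:=b])} = D" by (rule pair[OF xa qb ad1]) (auto intro: adjW)
  have D2: "{c (x[0:=b]), c (q[0:=a])} = D" by (rule pair[OF xb qa ad2]) (auto intro: adjW)
  have "c (x[0:=a]) \<noteq> c (q[0:=b])" using pc' xa qb ad1 by blast
  have "c (x[0:=b]) \<noteq> c (q[0:=a])" using pc' xb qa ad2 by blast
  show ?thesis using D1 D2 neq by (metis doubleton_eq_iff)
qed

lemma H:
  assumes x: "x \<in> V" and ab: "a < r" "b < r" "a \<noteq> b"
    and neq: "c (x[0:=a]) \<noteq> c (x[0:=b])" and z: "z \<in> V"
  shows "c (z[0:=a]) = c (x[0:=a]) \<and> c (z[0:=b]) = c (x[0:=b])"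
proof -
  let ?q = "gen x z"
  have 1: "c (?q[0:=a]) = c (x[0:=a]) \<and> c (?q[0:=b]) = c (x[0:=b])"
    by (rule K[OF x gen_V ab]) (use gen_nth neq in auto)
  have 2: "c (z[0:=a]) = c (?q[0:=a]) \<and> c (z[0:=b]) = c (?q[0:=b])"
    by (rule K[OF gen_V z ab]) (use gen_nth neq 1 in \<open>auto simp: eq_commute\<close>)
  show ?thesis using 1 2 by simp
qed

lemma H2:
  assumes x: "x \<in> V" and ab: "a < r" "b < r" "a \<noteq> b"
    and neq: "c (x[0:=a]) \<noteq> c (x[0:=b])"
  shows "\<forall>z\<in>V. \<forall>z'\<in>V. z!0 = z'!0 \<longrightarrow> c z = c z'"
proof -
  have all: "\<forall>z\<in>V. c (z[0:=e]) = c (x[0:=e])" if e: "e < r" for e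
  proof (cases "e = a")
    case True then show ?thesis using H[OF x ab neq] by blast
  next
    case False
    define w where "w = (gen x x)[0:=a]"
    have wV: "w \<in> V" unfolding w_def using upd_V[OF gen_V ab(1) n_pos] .
    have "c (w[0:=a]) = c (x[0:=a])" using H[OF x ab neq wV] by blast
    moreover have "w[0:=a] = w" unfolding w_def by simp
    ultimately have "c w = c (x[0:=a])" by simp
    moreover have "adj w (x[0:=e])" unfolding Kr_pow_adj_def
    proof (intro allI impI)
      fix k assume k: "k < n"
      show "w ! k \<noteq> x[0:=e] ! k"
      proof (cases "k = 0")
        case True then show ?thesis using False k x V_len unfolding w_def gen_def by simp
      next
        case nz: False
        have "gen x x ! k \<noteq> x ! k" using gen_nth[OF k] by blast
        then show ?thesis using nz unfolding w_def by simp
      qed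
    qed
    moreover have "x[0:=e] \<in> V" using upd_V x e n_pos by auto
    ultimately have "c (x[0:=a]) \<noteq> c (x[0:=e])" using pc'[OF wV, of "x[0:=e]"] by simp
    then show ?thesis using H[OF x ab(1) e not_sym[OF False]] by blast
  qed
  show ?thesis
  proof (intro ballI impI)
    fix z z' assume z: "z \<in> V" and z': "z' \<in> V" and e: "z!0 = z'!0"
    have "z!0 < r" using z n_pos unfolding V_iff by blast
    then have "c (z[0:=z!0]) = c (x[0:=z!0])" "c (z'[0:=z!0]) = c (x[0:=z!0])"
      using all z z' by blast+
    moreover have "z[0:=z!0] = z" by simp
    moreover have "z'[0:=z!0] = z'" using e by simp
    ultimately show "c z = c z'" by simp
  qed
qed

lemma free_coord: "\<exists>j u v. j < n \<and> u < r \<and> v < r \<and> u \<noteq> v \<and> (\<forall>x\<in>V. c (x[j:=u]) = c (x[j:=v]))"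
proof (cases "\<forall>x\<in>V. c (x[0:=0]) = c (x[0:=1])")
  case True
  have "0 < n \<and> 0 < r \<and> 1 < r \<and> (0::nat) \<noteq> 1" using n_pos r3 by simp
  with True show ?thesis by blast
next
  case False
  then obtain x where x: "x \<in> V" "c (x[0:=0]) \<noteq> c (x[0:=1])" by blast
  have r01: "0 < r" "1 < r" "(0::nat) \<noteq> 1" using r3 by simp_all
  have dep: "\<forall>z\<in>V. \<forall>z'\<in>V. z!0 = z'!0 \<longrightarrow> c z = c z'" by (rule H2[OF x(1) r01 x(2)])
  have n1: "1 < n" using n4 by simp
  have fr: "\<forall>z\<in>V. c (z[1:=0]) = c (z[1:=1])"
  proof
    fix z assume z: "z \<in> V"
    have "z[1:=0] \<in> V" "z[1:=1] \<in> V" using upd_V[OF z _ n1] r01 by blast+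
    moreover have "z[1:=0]!0 = z[1:=1]!0" by (simp add: nth_list_update)
    ultimately show "c (z[1:=0]) = c (z[1:=1])"
      using dep by blast
  qed
  show ?thesis using fr n1 r01 by blast
qed

end

definition sw :: "nat \<Rightarrow> nat \<Rightarrow> nat \<Rightarrow> nat" where
  "sw u v t = (if t = u then v else if t = v then u else t)"

lemma sw_sw: "sw u v (sw u v t) = t" unfolding sw_def by auto
lemma sw_lt: "t < r \<Longrightarrow> u < r \<Longrightarrow> v < r \<Longrightarrow> sw u v t < r" unfolding sw_def by auto
lemma sw_inj: "sw u v s = sw u v t \<longleftrightarrow> s = t" unfolding sw_def by auto

lemma not_dist:
  assumes pc: "proper_coloring V adj c" and cr: "\<forall>x\<in>V. c x < r"
  shows "\<not> distinguishing_coloring V adj c"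
proof -
  obtain j u v where j: "j < n" "u < r" "v < r" "u \<noteq> v" and fr: "\<forall>x\<in>V. c (x[j:=u]) = c (x[j:=v])"
    using free_coord[OF pc cr] by blast
  define f where "f x = x[j := sw u v (x!j)]" for x
  have fn: "f x ! i = (if i = j then sw u v (x!j) else x!i)" if "length x = n" "i < n" for x i
    using that j unfolding f_def by (simp add: nth_list_update)
  have fl: "length (f x) = length x" for x unfolding f_def by simp
  have fV: "f x \<in> V" if x: "x \<in> V" for x
    unfolding V_iff
  proof (intro conjI allI impI)
    show "length (f x) = n" using x fl V_len by simp
    fix i assume i: "i < n"
    show "f x ! i < r" using fn[OF V_len[OF x] i] x i j sw_lt unfolding V_iff by auto
  qed
  have ff: "f (f x) = x" if "x \<in> V" for x
    using that j unfolding f_def V_iff by (simp add: sw_sw)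
  have bij: "bij_betw f V V" by (rule bij_betw_byWitness[where f'=f]) (use fV ff in auto)
  have adjp: "adj x y \<longleftrightarrow> adj (f x) (f y)" if x: "x \<in> V" and y: "y \<in> V" for x y
  proof -
    have "\<forall>i<n. (x!i \<noteq> y!i) = (f x ! i \<noteq> f y ! i)"
      using fn[OF V_len[OF x]] fn[OF V_len[OF y]] sw_inj by simp
    then show ?thesis unfolding Kr_pow_adj_def by blast
  qed
  have aut: "graph_automorphism V adj f" unfolding graph_automorphism_def using bij adjp by blast
  have col: "c (f x) = c x" if x: "x \<in> V" for x
  proof -
    consider "x!j = u" | "x!j = v" | "x!j \<noteq> u \<and> x!j \<noteq> v" by blast
    then show ?thesis
    proof cases
      case 1 then have "x = x[j:=u]" "f x = x[j:=v]" unfolding f_def sw_def by auto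
      then show ?thesis using fr x by metis
    next
      case 2 then have "x = x[j:=v]" "f x = x[j:=u]" using j unfolding f_def sw_def by auto
      then show ?thesis using fr x by metis
    next
      case 3 then have "f x = x" unfolding f_def sw_def by simp
      then show ?thesis by simp
    qed
  qed
  have zV: "replicate n u \<in> V" using j by (simp add: V_iff)
  have "f (replicate n u) ! j = v" using fn[of "replicate n u" j] j by (simp add: sw_def)
  then have "f (replicate n u) \<noteq> replicate n u" using j by auto
  then show ?thesis unfolding distinguishing_coloring_def using aut col zV by blast
qed

end
context KR begin

abbreviation "m \<equiv> n - 1"
abbreviation "L \<equiv> m * (r - 1)"

lemma m3: "3 \<le> m" using n4 by simp

definition T :: "nat \<Rightarrow> nat list" where
  "T j = map (\<lambda>k. if k = 0 then 0 else (j + m - k) div m) [0..<n]"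

lemma T_len: "length (T j) = n" by (simp add: T_def)
lemma T_nth: "k < n \<Longrightarrow> T j ! k = (if k = 0 then 0 else (j + m - k) div m)" by (simp add: T_def)

lemma cc_lt: "j mod m + 1 < n"
proof -
  have "j mod m < m" using m3 by simp
  moreover have "m < n" using n4 by simp
  ultimately show ?thesis by linarith
qed

lemma T_step: "k < n \<Longrightarrow> T (Suc j) ! k = T j ! k + (if k = j mod m + 1 then 1 else 0)"
proof -
  assume k: "k < n"
  show ?thesis
  proof (cases "k = 0")
    case True then show ?thesis using k by (simp add: T_nth)
  next
    case False
    then have k1: "1 \<le> k" "k \<le> m" using k by auto
    have mpos: "0 < m" using m3 by simp
    have e: "Suc j + m - k = Suc (j + m - k)" using k1 by simp
    let ?s = "j mod m" and ?t = "m - k"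
    have s: "?s < m" using mpos by simp
    have t: "?t < m" using k1 by simp
    have jm: "j + m - k = j + ?t" using k1 by simp
    have md: "(j + m - k) mod m = (?s + ?t) mod m" unfolding jm by (simp add: mod_add_left_eq)
    have iff: "Suc ((j + m - k) mod m) = m \<longleftrightarrow> k = ?s + 1"
    proof (cases "?s + ?t < m")
      case True
      then have "(j + m - k) mod m = ?s + ?t" using md by simp
      then show ?thesis using k1 True m3 by arith
    next
      case False
      then have ge: "m \<le> ?s + ?t" by simp
      have "(?s + ?t) mod m = (?s + ?t - m) mod m" using ge by (rule le_mod_geq)
      also have "\<dots> = ?s + ?t - m" using s t by (intro mod_less) arith
      finally have "(?s + ?t) mod m = ?s + ?t - m" .
      then have "(j + m - k) mod m = ?s + ?t - m" using md by simp
      then show ?thesis using k1 False s t m3 by arith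
    qed
    have iff2: "Suc (j + m - k) mod m = 0 \<longleftrightarrow> k = ?s + 1"
      unfolding mod_Suc[of "j + m - k" m] using iff by auto
    have Tj: "T j ! k = (j + m - k) div m" using T_nth[OF k] False by presburger
    have "T (Suc j) ! k = (Suc j + m - k) div m" using T_nth[OF k] False by presburger
    also have "\<dots> = Suc (j + m - k) div m" by (simp only: e)
    also have "\<dots> = (if Suc (j + m - k) mod m = 0 then Suc ((j + m - k) div m) else (j + m - k) div m)"
      by (rule div_Suc)
    also have "\<dots> = T j ! k + (if k = j mod m + 1 then 1 else 0)"
      unfolding iff2 Tj by simp
    finally show ?thesis .
  qed
qed


lemma hd_sym: "hd x y = hd y x"
  unfolding hd_def by (auto intro!: arg_cong[where f=card])

lemma hd_self: "hd x x = 0" unfolding hd_def by simp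

lemma hd0: "length x = n \<Longrightarrow> length y = n \<Longrightarrow> hd x y = 0 \<Longrightarrow> x = y"
proof -
  assume l: "length x = n" "length y = n" and h: "hd x y = 0"
  have fin: "finite {i. i < n \<and> x!i \<noteq> y!i}" by simp
  then have "{i. i < n \<and> x!i \<noteq> y!i} = {}" using h unfolding hd_def by simp
  then show "x = y" using l by (intro nth_equalityI) auto
qed

lemma hd_ge2: "i < n \<Longrightarrow> j < n \<Longrightarrow> i \<noteq> j \<Longrightarrow> x!i \<noteq> y!i \<Longrightarrow> x!j \<noteq> y!j \<Longrightarrow> 2 \<le> hd x y"
proof -
  assume a: "i < n" "j < n" "i \<noteq> j" "x!i \<noteq> y!i" "x!j \<noteq> y!j"
  have "{i, j} \<subseteq> {i. i < n \<and> x!i \<noteq> y!i}" using a by auto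
  then have "card {i, j} \<le> hd x y" unfolding hd_def by (intro card_mono) auto
  then show ?thesis using a by simp
qed

lemma hd_one: "k < n \<Longrightarrow> x!k \<noteq> y!k \<Longrightarrow> (\<forall>i<n. i \<noteq> k \<longrightarrow> x!i = y!i) \<Longrightarrow> hd x y = 1"
proof -
  assume a: "k < n" "x!k \<noteq> y!k" "\<forall>i<n. i \<noteq> k \<longrightarrow> x!i = y!i"
  have "{i. i < n \<and> x!i \<noteq> y!i} = {k}" using a by auto
  then show ?thesis unfolding hd_def by simp
qed

lemma T_mono: "j \<le> j' \<Longrightarrow> k < n \<Longrightarrow> T j ! k \<le> T j' ! k"
proof (induction j' rule: dec_induct)
  case (step i) then show ?case using T_step[of k i] by simp
qed simp

lemma T_hd1: "hd (T j) (T (Suc j)) = 1"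
proof (rule hd_one[OF cc_lt])
  show "T j ! (j mod m + 1) \<noteq> T (Suc j) ! (j mod m + 1)" using T_step[of "j mod m + 1" j] cc_lt[of j] by simp
  show "\<forall>i<n. i \<noteq> j mod m + 1 \<longrightarrow> T j ! i = T (Suc j) ! i" using T_step by simp
qed

lemma T_hd2: "j + 2 \<le> k \<Longrightarrow> 2 \<le> hd (T j) (T k)"
proof -
  assume jk: "j + 2 \<le> k"
  let ?c1 = "j mod m + 1" and ?c2 = "Suc j mod m + 1"
  have ne: "?c1 \<noteq> ?c2" using m3 by (simp add: mod_Suc)
  have "T (Suc j) ! ?c1 = T j ! ?c1 + 1" using T_step[of ?c1 j] cc_lt[of j] by simp
  then have "T j ! ?c1 < T (Suc j) ! ?c1" by simp
  also have "\<dots> \<le> T k ! ?c1" using jk cc_lt by (intro T_mono) auto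
  finally have 1: "T j ! ?c1 \<noteq> T k ! ?c1" by simp
  have "T (Suc j) ! ?c2 = T j ! ?c2" using T_step[of ?c2 j] cc_lt[of "Suc j"] ne by simp
  then have "T j ! ?c2 = T (Suc j) ! ?c2" by simp
  also have "T (Suc (Suc j)) ! ?c2 = T (Suc j) ! ?c2 + 1" using T_step[of ?c2 "Suc j"] cc_lt[of "Suc j"] by simp
  then have "T (Suc j) ! ?c2 < T (Suc (Suc j)) ! ?c2" by simp
  also have "\<dots> \<le> T k ! ?c2" using jk cc_lt by (intro T_mono) auto
  finally have 2: "T j ! ?c2 \<noteq> T k ! ?c2" by simp
  show ?thesis by (rule hd_ge2[OF cc_lt cc_lt ne 1 2])
qed

lemma aux_mult: "1 \<le> b \<Longrightarrow> (a::nat) * (b - 1) + a = b * a"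
  by (cases b) (simp_all add: mult.commute)

lemma aux_div: "0 < (q::nat) \<Longrightarrow> b < q \<Longrightarrow> (a * q + b) div q = a" by simp

lemma T_V: "j \<le> L \<Longrightarrow> T j \<in> V"
  unfolding V_iff
proof (intro conjI allI impI)
  assume j: "j \<le> L"
  show "length (T j) = n" by (rule T_len)
  fix k assume k: "k < n"
  show "T j ! k < r"
  proof (cases "k = 0")
    case True then show ?thesis using T_nth[OF k] r3 by simp
  next
    case False
    have e: "m * (r - 1) + m = r * m" using aux_mult[of r m] r3 by simp
    have "j + m - k < j + m" using False m3 by simp
    also have "\<dots> \<le> r * m" using j e by linarith
    finally have "j + m - k < r * m" .
    then have "(j + m - k) div m < r" by (rule less_mult_imp_div_less)
    then show ?thesis using T_nth[OF k] False by presburger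
  qed
qed


definition E :: "nat \<Rightarrow> nat list" where
  "E v = map (\<lambda>k. if k = m then v else 0) [0..<n]"

lemma E_len: "length (E v) = n" by (simp add: E_def)
lemma E_nth: "k < n \<Longrightarrow> E v ! k = (if k = m then v else 0)" by (simp add: E_def)
lemma m_lt: "m < n" using n4 by simp

lemma E_V: "v < r \<Longrightarrow> E v \<in> V"
  unfolding V_iff using E_nth E_len r3 by auto

lemma T0_nth: "k < n \<Longrightarrow> T 0 ! k = 0"
  by (simp add: T_nth)

lemma hd_T0_E: "v \<noteq> 0 \<Longrightarrow> hd (T 0) (E v) = 1"
  by (rule hd_one[OF m_lt]) (use T0_nth E_nth m_lt in auto)

lemma hd_E12: "hd (E 1) (E 2) = 1"
  by (rule hd_one[OF m_lt]) (use E_nth m_lt in auto)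

lemma E_ne: "E 1 \<noteq> E 2" using hd_E12 hd_self[of "E 1"] by auto

lemma hd_E_T: "1 \<le> j \<Longrightarrow> v \<noteq> 0 \<Longrightarrow> 2 \<le> hd (E v) (T j)"
proof -
  assume j: "1 \<le> j" and v: "v \<noteq> 0"
  have n1: "1 < n" and n2: "2 < n" using n4 by auto
  have mp: "0 < m" using m3 by simp
  have "m \<le> j + m - 1" using j by simp
  then have "0 < (j + m - 1) div m" using mp div_greater_zero_iff[of "j + m - 1" m] by blast
  then have "1 \<le> (j + m - 1) div m" by simp
  then have c1: "E v ! 1 \<noteq> T j ! 1" using E_nth[OF n1] T_nth[OF n1] m3 by simp
  show ?thesis
  proof (cases "j < m")
    case True
    have "(j + m - m) div m = 0" using True by simp
    then have "E v ! m \<noteq> T j ! m" using E_nth[OF m_lt] T_nth[OF m_lt] v m3 by simp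
    then show ?thesis using hd_ge2[OF n1 m_lt _ c1] m3 by simp
  next
    case False
    have "m \<le> j + m - 2" using False m3 by linarith
    then have "0 < (j + m - 2) div m" using mp div_greater_zero_iff[of "j + m - 2" m] by blast
    then have "1 \<le> (j + m - 2) div m" by simp
    then have "E v ! 2 \<noteq> T j ! 2" using E_nth[OF n2] T_nth[OF n2] m3 by simp
    then show ?thesis using hd_ge2[OF n1 n2 _ c1] by simp
  qed
qed

definition S :: "nat list set" where
  "S = T ` {..L} \<union> {E 1, E 2}"

lemma L2: "2 \<le> L"
proof -
  have "3 * 2 \<le> m * (r - 1)" using m3 r3 by (intro mult_le_mono) auto
  then show ?thesis by simp
qed

lemma S_V: "s \<in> S \<Longrightarrow> s \<in> V"
  unfolding S_def using T_V E_V r3 by auto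

lemma S_0: "s \<in> S \<Longrightarrow> s ! 0 = 0"
  unfolding S_def using T_nth E_nth m3 n4 by auto

lemma T_ne: "j \<noteq> k \<Longrightarrow> T j \<noteq> T k"
proof
  assume ne: "j \<noteq> k" and eq: "T j = T k"
  consider "k = Suc j" | "j = Suc k" | "j + 2 \<le> k" | "k + 2 \<le> j" using ne by linarith
  then show False
  proof cases
    case 1 then show ?thesis using T_hd1[of j] eq hd_self by simp
  next
    case 2 then show ?thesis using T_hd1[of k] eq hd_self by simp
  next
    case 3 then show ?thesis using T_hd2[OF 3] eq hd_self by simp
  next
    case 4 then show ?thesis using T_hd2[OF 4] eq hd_self by simp
  qed
qed

lemma E_T_ne: "v \<noteq> 0 \<Longrightarrow> E v \<noteq> T j"
proof
  assume v: "v \<noteq> 0" and eq: "E v = T j"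
  show False
  proof (cases "j = 0")
    case True then show ?thesis using hd_T0_E[OF v] eq hd_self by simp
  next
    case False then show ?thesis using hd_E_T[of j v] v eq hd_self by simp
  qed
qed

lemma NT:
  assumes s: "s \<in> S" and h: "hd (T j) s = 1"
  shows "(j = 0 \<and> (s = T 1 \<or> s = E 1 \<or> s = E 2)) \<or> (1 \<le> j \<and> (s = T (j - 1) \<or> s = T (Suc j)))"
proof -
  consider k where "s = T k" | "s = E 1" | "s = E 2" using s unfolding S_def by blast
  then show ?thesis
  proof cases
    case (1 k)
    have "\<not> j + 2 \<le> k" using T_hd2[of j k] h 1 by auto
    moreover have "\<not> k + 2 \<le> j" using T_hd2[of k j] h 1 hd_sym by auto
    moreover have "k \<noteq> j" using h 1 hd_self by auto
    ultimately have "k = Suc j \<or> j = Suc k" by linarith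
    then show ?thesis using 1 by (cases "j = 0") auto
  next
    case 2 then show ?thesis using hd_E_T[of j 1] h hd_sym by (cases "j = 0") auto
  next
    case 3 then show ?thesis using hd_E_T[of j 2] h hd_sym by (cases "j = 0") auto
  qed
qed

lemma NE:
  assumes s: "s \<in> S" and v: "v = 1 \<or> v = 2" and h: "hd (E v) s = 1"
  shows "s = T 0 \<or> s = E 1 \<or> s = E 2"
proof -
  consider k where "s = T k" | "s = E 1" | "s = E 2" using s unfolding S_def by blast
  then show ?thesis
  proof cases
    case (1 k)
    then show ?thesis using hd_E_T[of k v] h v by (cases "k = 0") auto
  qed auto
qed


lemma hd_diff:
  assumes k: "k < n" and AB: "\<forall>i<n. i \<noteq> k \<longrightarrow> A!i = B!i"
  shows "hd z A + (if z!k \<noteq> B!k then 1 else 0) = hd z B + (if z!k \<noteq> A!k then 1 else 0)"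
proof -
  define R where "R = {i. i < n \<and> i \<noteq> k \<and> z!i \<noteq> A!i}"
  have finR: "finite R" unfolding R_def by simp
  have kR: "k \<notin> R" unfolding R_def by simp
  have RB: "R = {i. i < n \<and> i \<noteq> k \<and> z!i \<noteq> B!i}" unfolding R_def using AB by auto
  have cnt: "hd z X = card R + (if z!k \<noteq> X!k then 1 else 0)"
    if RX: "R = {i. i < n \<and> i \<noteq> k \<and> z!i \<noteq> X!i}" for X
  proof (cases "z!k \<noteq> X!k")
    case True
    then have "{i. i < n \<and> z!i \<noteq> X!i} = insert k R" using RX k by auto
    then show ?thesis unfolding hd_def using True finR kR by simp
  next
    case False
    then have "{i. i < n \<and> z!i \<noteq> X!i} = R" using RX k by auto
    then show ?thesis unfolding hd_def using False by simp
  qed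
  show ?thesis using cnt[OF R_def] cnt[OF RB] by simp
qed

lemma resolve:
  assumes x: "x \<in> V" and y: "y \<in> V" and eq: "\<forall>j\<le>L. hd x (T j) = hd y (T j)"
    and k: "k < n" "k \<noteq> 0" and w1: "1 \<le> x!k"
  shows "y!k = x!k"
proof -
  define w where "w = x!k"
  have wr: "w < r" using x k unfolding V_iff w_def by auto
  have mp: "0 < m" using m3 by simp
  have k1: "1 \<le> k" "k \<le> m" using k by auto
  define j where "j = (w - 1) * m + (k - 1)"
  have "j mod m = (k - 1) mod m" unfolding j_def by (metis add.commute mod_mult_self1)
  then have jmod: "j mod m = k - 1" using k1 by simp
  have kk: "k = j mod m + 1" using jmod k1 by simp
  have "j + m - k = (w - 1) * m + (m - 1)" unfolding j_def using k1 by simp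
  then have "(j + m - k) div m = w - 1" using aux_div[OF mp, of "m - 1" "w - 1"] mp by simp
  then have Tj: "T j ! k = w - 1" using T_nth[OF k(1)] k(2) by presburger
  have Tj1: "T (Suc j) ! k = w" using T_step[OF k(1), of j] kk Tj w1 unfolding w_def by simp
  have AB: "\<forall>i<n. i \<noteq> k \<longrightarrow> T j ! i = T (Suc j) ! i" using T_step kk by simp
  have "Suc j \<le> (w - 1) * m + m" unfolding j_def using k1 by simp
  also have "\<dots> = w * m" using aux_mult[of w m] w1 unfolding w_def by (simp add: mult.commute)
  also have "\<dots> \<le> (r - 1) * m" using wr by (intro mult_le_mono1) simp
  finally have jL: "Suc j \<le> L" by (simp add: mult.commute)
  have ex: "hd x (T j) + (if x!k \<noteq> T (Suc j) ! k then 1 else 0) = hd x (T (Suc j)) + (if x!k \<noteq> T j ! k then 1 else 0)"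
    by (rule hd_diff[OF k(1) AB])
  have ey: "hd y (T j) + (if y!k \<noteq> T (Suc j) ! k then 1 else 0) = hd y (T (Suc j)) + (if y!k \<noteq> T j ! k then 1 else 0)"
    by (rule hd_diff[OF k(1) AB])
  have "hd x (T j) = hd y (T j)" "hd x (T (Suc j)) = hd y (T (Suc j))" using eq jL by auto
  then show ?thesis using ex ey Tj Tj1 w1 unfolding w_def by (auto split: if_splits)
qed

definition col :: "nat list \<Rightarrow> nat" where
  "col x = (if x \<in> S then r else x!0)"

lemma TS: "j \<le> L \<Longrightarrow> T j \<in> S" unfolding S_def by auto
lemma ES: "E 1 \<in> S" "E 2 \<in> S" unfolding S_def by auto

lemma V0: "x \<in> V \<Longrightarrow> x!0 < r" using n4 unfolding V_iff by auto

lemma col_range: "col ` V \<subseteq> {..<r+1}"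
  unfolding col_def using V0 by (auto intro: less_SucI)

lemma col_proper: "proper_coloring V adj col"
  unfolding proper_coloring_def
proof (intro ballI impI)
  fix u v assume u: "u \<in> V" and v: "v \<in> V" and a: "adj u v"
  have ne: "u!0 \<noteq> v!0" using a n4 unfolding Kr_pow_adj_def by auto
  show "col u \<noteq> col v" using ne S_0 V0[OF u] V0[OF v] unfolding col_def by auto
qed

context
  fixes f
  assumes aut: "graph_automorphism V adj f" and cp: "\<forall>v\<in>V. col (f v) = col v"
begin

lemma fV: "x \<in> V \<Longrightarrow> f x \<in> V" using aut unfolding graph_automorphism_def bij_betw_def by auto
lemma finj: "x \<in> V \<Longrightarrow> y \<in> V \<Longrightarrow> f x = f y \<Longrightarrow> x = y"
  using aut unfolding graph_automorphism_def bij_betw_def inj_on_def by auto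
lemma fhd: "x \<in> V \<Longrightarrow> y \<in> V \<Longrightarrow> hd (f x) (f y) = hd x y" by (rule aut_hd[OF aut])

lemma fS: "x \<in> V \<Longrightarrow> x \<in> S \<Longrightarrow> f x \<in> S"
  using cp fV V0 unfolding col_def by (metis less_irrefl)

lemma f0: "x \<in> V \<Longrightarrow> f x ! 0 = x ! 0"
proof -
  assume x: "x \<in> V"
  show ?thesis
  proof (cases "x \<in> S")
    case True then show ?thesis using fS[OF x] S_0 by simp
  next
    case False
    have "col (f x) = x!0" using cp x False unfolding col_def by simp
    moreover have "f x \<notin> S" using calculation V0[OF x] unfolding col_def by auto
    ultimately show ?thesis unfolding col_def by simp
  qed
qed

definition P3 :: "nat list \<Rightarrow> bool" where
  "P3 x \<longleftrightarrow> (\<exists>a b c. a \<in> S \<and> b \<in> S \<and> c \<in> S \<and> a \<noteq> b \<and> a \<noteq> c \<and> b \<noteq> c \<and> hd x a = 1 \<and> hd x b = 1 \<and> hd x c = 1)"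

lemma P3_T0: "P3 (T 0)"
proof -
  have "1 \<le> L" using L2 by linarith
  then have "T 1 \<in> S" "E 1 \<in> S" "E 2 \<in> S" using TS ES by auto
  moreover have "T 1 \<noteq> E 1" "T 1 \<noteq> E 2" using E_T_ne by (metis one_neq_zero zero_neq_numeral)+
  moreover note E_ne
  moreover have "hd (T 0) (T 1) = 1" using T_hd1[of 0] by simp
  moreover have "hd (T 0) (E 1) = 1" "hd (T 0) (E 2) = 1" using hd_T0_E by auto
  ultimately show ?thesis unfolding P3_def by blast
qed

lemma P3_only: "y \<in> S \<Longrightarrow> P3 y \<Longrightarrow> y = T 0"
proof -
  assume yS: "y \<in> S" and p: "P3 y"
  then obtain a b c where abc: "a \<in> S" "b \<in> S" "c \<in> S" "a \<noteq> b" "a \<noteq> c" "b \<noteq> c"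
    "hd y a = 1" "hd y b = 1" "hd y c = 1" unfolding P3_def by blast
  from yS consider j where "y = T j" | "y = E 1" | "y = E 2" unfolding S_def by blast
  then show ?thesis
  proof cases
    case (1 j)
    show ?thesis
    proof (cases "j = 0")
      case False
      have "a = T (j - 1) \<or> a = T (Suc j)" using NT[of a j] abc 1 False by blast
      moreover have "b = T (j - 1) \<or> b = T (Suc j)" using NT[of b j] abc 1 False by blast
      moreover have "c = T (j - 1) \<or> c = T (Suc j)" using NT[of c j] abc 1 False by blast
      ultimately show ?thesis using abc by blast
    qed (use 1 in simp)
  next
    case 2
    have "a \<noteq> E 1" "b \<noteq> E 1" "c \<noteq> E 1" using abc 2 hd_self by auto
    then show ?thesis using NE[of a 1] NE[of b 1] NE[of c 1] abc 2 by auto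
  next
    case 3
    have "a \<noteq> E 2" "b \<noteq> E 2" "c \<noteq> E 2" using abc 3 hd_self by auto
    then show ?thesis using NE[of a 2] NE[of b 2] NE[of c 2] abc 3 by auto
  qed
qed

lemma fT0: "f (T 0) = T 0"
proof -
  have T0S: "T 0 \<in> S" using TS by simp
  have T0V: "T 0 \<in> V" using S_V[OF T0S] .
  obtain a b c where abc: "a \<in> S" "b \<in> S" "c \<in> S" "a \<noteq> b" "a \<noteq> c" "b \<noteq> c"
    "hd (T 0) a = 1" "hd (T 0) b = 1" "hd (T 0) c = 1" using P3_T0 unfolding P3_def by blast
  have V: "a \<in> V" "b \<in> V" "c \<in> V" using abc S_V by auto
  have "f a \<in> S" "f b \<in> S" "f c \<in> S" using fS V abc by auto
  moreover have "f a \<noteq> f b" "f a \<noteq> f c" "f b \<noteq> f c" using finj V abc by metis+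
  moreover have "hd (f (T 0)) (f a) = 1" "hd (f (T 0)) (f b) = 1" "hd (f (T 0)) (f c) = 1"
    using fhd[OF T0V] V abc by auto
  ultimately have "P3 (f (T 0))" unfolding P3_def by blast
  then show ?thesis using P3_only fS[OF T0V T0S] by blast
qed

lemma fT1: "f (T 1) = T 1"
proof -
  have "1 \<le> L" using L2 by linarith
  then have T0S: "T 0 \<in> S" and T1S: "T 1 \<in> S" and T2S: "T 2 \<in> S" using TS L2 by auto
  have T0V: "T 0 \<in> V" and T1V: "T 1 \<in> V" and T2V: "T 2 \<in> V" using S_V T0S T1S T2S by auto
  have "hd (T 0) (f (T 1)) = 1" using fhd[OF T0V T1V] fT0 T_hd1[of 0] by simp
  then have c: "f (T 1) = T 1 \<or> f (T 1) = E 1 \<or> f (T 1) = E 2" using NT[OF fS[OF T1V T1S], of 0] by auto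
  have h12: "hd (f (T 1)) (f (T 2)) = 1" using fhd[OF T1V T2V] T_hd1[of 1] by (simp add: numeral_2_eq_2)
  have h20: "2 \<le> hd (f (T 2)) (T 0)" using fhd[OF T2V T0V] fT0 T_hd2[of 0 2] hd_sym by simp
  have f2S: "f (T 2) \<in> S" using fS[OF T2V T2S] .
  have "f (T 1) \<noteq> E v" if v: "v = 1 \<or> v = 2" for v
  proof
    assume "f (T 1) = E v"
    then have "f (T 2) = T 0 \<or> f (T 2) = E 1 \<or> f (T 2) = E 2" using NE[OF f2S v] h12 by simp
    moreover have "hd (T 0) (T 0) = 0" "hd (E 1) (T 0) = 1" "hd (E 2) (T 0) = 1"
      using hd_self hd_T0_E[of 1] hd_T0_E[of 2] hd_sym by auto
    ultimately show False using h20 by auto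
  qed
  then show ?thesis using c by blast
qed

lemma fT: "Suc j \<le> L \<Longrightarrow> f (T j) = T j \<and> f (T (Suc j)) = T (Suc j)"
proof (induction j)
  case 0 then show ?case using fT0 fT1 by simp
next
  case (Suc j)
  then have IH: "f (T j) = T j" "f (T (Suc j)) = T (Suc j)" by auto
  have S1: "T (Suc j) \<in> S" and S2: "T (Suc (Suc j)) \<in> S" and S0: "T j \<in> S" using TS Suc.prems by auto
  have V1: "T (Suc j) \<in> V" and V2: "T (Suc (Suc j)) \<in> V" and V0': "T j \<in> V" using S_V S1 S2 S0 by auto
  have "hd (T (Suc j)) (f (T (Suc (Suc j)))) = 1" using fhd[OF V1 V2] IH T_hd1 by simp
  then have "f (T (Suc (Suc j))) = T j \<or> f (T (Suc (Suc j))) = T (Suc (Suc j))"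
    using NT[OF fS[OF V2 S2], of "Suc j"] by simp
  moreover have "f (T (Suc (Suc j))) \<noteq> T j"
  proof
    assume "f (T (Suc (Suc j))) = T j"
    then have "T (Suc (Suc j)) = T j" using finj[OF V2 V0'] IH by simp
    then show False using T_ne by simp
  qed
  ultimately show ?case using IH by simp
qed

lemma f_id: "x \<in> V \<Longrightarrow> f x = x"
proof -
  assume x: "x \<in> V"
  have y: "f x \<in> V" using fV[OF x] .
  have eq: "\<forall>j\<le>L. hd x (T j) = hd (f x) (T j)"
  proof (intro allI impI)
    fix j assume j: "j \<le> L"
    have TS: "T j \<in> S" using TS j by auto
    have fTj: "f (T j) = T j"
    proof (cases j)
      case 0 then show ?thesis using fT0 by simp
    next
      case (Suc i) then show ?thesis using fT[of i] j by simp
    qed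
    show "hd x (T j) = hd (f x) (T j)" using fhd[OF x S_V[OF TS]] fTj by simp
  qed
  have eq': "\<forall>j\<le>L. hd (f x) (T j) = hd x (T j)" using eq by simp
  show ?thesis
  proof (rule nth_equalityI)
    show "length (f x) = length x" using x y V_len by simp
    fix k assume "k < length (f x)"
    then have k: "k < n" using y V_len by simp
    show "f x ! k = x ! k"
    proof (cases "k = 0")
      case True then show ?thesis using f0[OF x] by simp
    next
      case False
      show ?thesis
      proof (cases "1 \<le> x!k")
        case True then show ?thesis using resolve[OF x y eq k False True] by simp
      next
        case F2: False
        show ?thesis
        proof (cases "1 \<le> f x ! k")
          case True then show ?thesis using resolve[OF y x eq' k False True] by simp
        next
          case False then show ?thesis using F2 by simp
        qed
      qed
    qed
  qed
qed

end

lemma col_dist: "distinguishing_coloring V adj col"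
  unfolding distinguishing_coloring_def using f_id by blast

end

theorem mainTheorem7:
  fixes r n :: nat
  assumes "r \<ge> 3" and "n \<ge> 4"
  shows "dist_chromatic_number (Kr_pow_verts r n) (Kr_pow_adj n) = r + 1"
proof -
  interpret KR r n using assms by unfold_locales
  show ?thesis
    unfolding dist_chromatic_number_def
  proof (rule Least_equality)
    show "\<exists>c. c ` V \<subseteq> {..<r + 1} \<and> proper_coloring V adj c \<and> distinguishing_coloring V adj c"
      using col_range col_proper col_dist by blast
  next
    fix k assume "\<exists>c. c ` V \<subseteq> {..<k} \<and> proper_coloring V adj c \<and> distinguishing_coloring V adj c"
    then obtain c where c: "c ` V \<subseteq> {..<k}" "proper_coloring V adj c" "distinguishing_coloring V adj c" by blast
    show "r + 1 \<le> k"
    proof (rule ccontr)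
      assume "\<not> r + 1 \<le> k"
      then have "\<forall>x\<in>V. c x < r" using c(1) by auto
      then show False using not_dist c(2,3) by blast
    qed
  qed
qed

end
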